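(* Let $(X,d)$ be a complete metric space, $N\geq1$, $\{A_{1},\ldots,A_{N}\}$ a family of nonempty closed subsets of $X$, and $T:X\rightarrow X$. Set $A_{N+1}:=A_{1}$. Suppose: (F1) $T(A_{i})\subseteq A_{i+1}$ for all $i\in\{1,\dots,N\}$; (F3) for every $\varepsilon>0$ there exists $\delta(\varepsilon)>0$ such that for all $i\in\{1,\ldots,N\}$, $x\in A_{i}$, $y\in A_{i+1}$: $\varepsilon\leq d(x,y)<\varepsilon+\delta(\varepsilon)$ implies $d(Tx,Ty)<\varepsilon$. Then $\bigcap_{i=1}^{N}A_{i}$ is nonempty and $T$ has a fixed point $x^{\ast}\in\bigcap_{i=1}^{N}A_{i}$. Moreover, $x^{\ast}$ is the unique fixed point of $T$ in $\bigcup_{i=1}^{N}A_{i}$, and $T^{n}x\rightarrow x^{\ast}$ as $n\rightarrow\infty$ for all $x\in\bigcup_{i=1}^{N}A_{i}$. *)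

theory Defs
  imports "HOL-Analysis.Analysis"
begin

definition cnext :: "nat \<Rightarrow> nat \<Rightarrow> nat" where
  "cnext N i = (if i = N then 1 else Suc i)"

end

theory Submission
  imports Defs
begin

locale cyc =
  fixes B :: "nat \<Rightarrow> 'a::complete_space set" and T :: "'a \<Rightarrow> 'a" and N :: nat
  assumes N: "N \<ge> 1" and cl: "closed (B j)" and BT: "y \<in> B j \<Longrightarrow> T y \<in> B (Suc j)"
    and per: "B (j + N) = B j"
    and MK: "\<epsilon> > 0 \<Longrightarrow> \<exists>\<delta>>0. \<forall>j. \<forall>y\<in>B j. \<forall>z\<in>B (Suc j).
               \<epsilon> \<le> dist y z \<and> dist y z < \<epsilon> + \<delta> \<longrightarrow> dist (T y) (T z) < \<epsilon>"
begin

lemma per2: "B (j + k*N) = B j"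
proof (induction k)
  case 0 then show ?case by simp
next
  case (Suc k)
  have e: "j + Suc k * N = (j + k*N) + N" by simp
  show ?case by (metis e per Suc.IH)
qed

lemma contr_strict:
  assumes "y \<in> B j" "z \<in> B (Suc j)" "y \<noteq> z"
  shows "dist (T y) (T z) < dist y z"
proof -
  define e where "e = dist y z"
  have "e > 0" using assms by (simp add: e_def)
  from MK[OF this] obtain \<delta> where "\<delta> > 0" and
    H: "\<forall>j. \<forall>y\<in>B j. \<forall>z\<in>B (Suc j). e \<le> dist y z \<and> dist y z < e + \<delta> \<longrightarrow> dist (T y) (T z) < e"
    by blast
  then show ?thesis using assms by (auto simp: e_def)
qed

lemma contr:
  assumes "y \<in> B j" "z \<in> B (Suc j)"
  shows "dist (T y) (T z) \<le> dist y z"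
  using contr_strict[OF assms] by (cases "y = z") auto

lemma unique:
  assumes "z \<in> B j" "T z = z" "\<forall>j. p \<in> B j" "T p = p"
  shows "z = p"
  using contr_strict[OF assms(1), of p] assms by auto

lemma orbit_conv:
  assumes x0: "x0 \<in> B c"
  shows "\<exists>p. (\<forall>j. p \<in> B j) \<and> T p = p \<and> (\<lambda>n. (T^^n) x0) \<longlonglongrightarrow> p"
proof -
  define x where "x n = (T^^n) x0" for n
  have xS: "x (Suc n) = T (x n)" for n by (simp add: x_def)
  have xB: "x n \<in> B (c+n)" for n
  proof (induction n)
    case 0 then show ?case by (simp add: x_def x0)
  next
    case (Suc n) then show ?case using BT[OF Suc.IH] by (simp add: xS)
  qed
  have xBk: "x (n + k*N + 1) \<in> B (Suc (c+n))" for n k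
  proof -
    have e: "c + (n + k*N + 1) = Suc (c+n) + k*N" by simp
    have "B (c + (n + k*N + 1)) = B (Suc (c+n))" using per2[of "Suc (c+n)" k] unfolding e .
    then show ?thesis using xB[of "n+k*N+1"] by (rule subst)
  qed
  define d where "d n = dist (x n) (x (Suc n))" for n
  have dmono: "d (Suc n) \<le> d n" for n
    using contr[OF xB[of n], of "x (Suc n)"] xB[of "Suc n"] by (simp add: d_def xS)
  have dec: "d n \<le> d m" if "m \<le> n" for m n
    using that
  proof (induction rule: dec_induct)
    case base then show ?case by simp
  next
    case (step n) then show ?case using dmono[of n] by linarith
  qed
  have d0: "\<exists>K. \<forall>n\<ge>K. d n < \<eta>" if "\<eta> > 0" for \<eta>
  proof -
    define r where "r = Inf (range d)"
    have bdd: "bdd_below (range d)" by (auto simp: d_def intro: bdd_belowI[where m=0])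
    have r_le: "r \<le> d n" for n unfolding r_def by (rule cInf_lower) (auto simp: bdd)
    have r0: "r = 0"
    proof (rule ccontr)
      assume "r \<noteq> 0"
      have "r \<ge> 0" unfolding r_def by (rule cInf_greatest) (auto simp: d_def)
      with \<open>r \<noteq> 0\<close> have "r > 0" by simp
      from MK[OF this] obtain \<delta> where "\<delta> > 0" and
        H: "\<forall>j. \<forall>y\<in>B j. \<forall>z\<in>B (Suc j). r \<le> dist y z \<and> dist y z < r + \<delta> \<longrightarrow> dist (T y) (T z) < r"
        by blast
      have "Inf (range d) < r + \<delta>" using r_def \<open>\<delta>>0\<close> by simp
      then obtain n where n: "d n < r + \<delta>" using cInf_lessD[of "range d"] by auto
      have "x (Suc n) \<in> B (Suc (c+n))" using xB[of "Suc n"] by simp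
      then have "d (Suc n) < r" using H xB[of n] n r_le[of n] by (auto simp: d_def xS)
      with r_le[of "Suc n"] show False by simp
    qed
    have "Inf (range d) < \<eta>" using r0 r_def that by simp
    then obtain K where "d K < \<eta>" using cInf_lessD[of "range d"] by auto
    then show ?thesis using dec le_less_trans by blast
  qed
  have key: "\<exists>K. \<forall>a\<ge>K. \<forall>b>a. dist (x a) (x b) < 3*\<epsilon>" if eps: "\<epsilon> > 0" for \<epsilon>
  proof -
    obtain \<delta>0 where \<delta>0: "\<delta>0 > 0" and
      H: "\<forall>j. \<forall>y\<in>B j. \<forall>z\<in>B (Suc j). \<epsilon> \<le> dist y z \<and> dist y z < \<epsilon> + \<delta>0 \<longrightarrow> dist (T y) (T z) < \<epsilon>"
      using MK[OF eps] by blast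
    define \<delta> where "\<delta> = min \<delta>0 \<epsilon>"
    have \<delta>: "\<delta> > 0" "\<delta> \<le> \<delta>0" "\<delta> \<le> \<epsilon>" using \<delta>0 that by (auto simp: \<delta>_def)
    have Nr: "real N \<ge> 1" using N by simp
    have "\<delta> / N > 0" using \<delta> Nr by simp
    then obtain K where K: "\<forall>n\<ge>K. d n < \<delta>/N" using d0 by blast
    have dN: "\<delta>/N \<le> \<delta>" using \<delta> Nr by (simp add: divide_le_eq)
    have sumb: "dist (x n) (x (n+j)) \<le> real j * (\<delta>/N)" if "n \<ge> K" for n j
    proof (induction j)
      case 0 then show ?case by simp
    next
      case (Suc j)
      have "dist (x n) (x (n+Suc j)) \<le> dist (x n) (x (n+j)) + dist (x (n+j)) (x (Suc (n+j)))"
        using dist_triangle by simp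
      also have "\<dots> \<le> real j * (\<delta>/N) + \<delta>/N" using Suc K that
        by (intro add_mono) (auto simp: d_def less_imp_le)
      finally show ?case using Nr by (simp add: field_simps)
    qed
    have step: "dist (x (Suc n)) (x (Suc m)) < \<epsilon>"
      if "x n \<in> B j" "x m \<in> B (Suc j)" "dist (x n) (x m) < \<epsilon>+\<delta>" for n m j
    proof (cases "\<epsilon> \<le> dist (x n) (x m)")
      case True then show ?thesis using H that \<delta> by (auto simp: xS)
    next
      case False then show ?thesis using contr[OF that(1,2)] by (simp add: xS)
    qed
    have claim: "dist (x n) (x (n + k*N + 1)) < \<epsilon>+\<delta>" if "n \<ge> K" for n k
    proof (induction k)
      case 0 then show ?case using K that dN \<open>\<epsilon>>0\<close> by (auto simp: d_def)
    next
      case (Suc k)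
      define m where "m = n + k*N + 1"
      have s: "dist (x (Suc n)) (x (Suc m)) < \<epsilon>"
        using step[OF xB[of n] xBk[of n k]] Suc.IH by (simp add: m_def)
      have t: "dist (x (Suc m)) (x (Suc m + (N-1))) \<le> real (N-1) * (\<delta>/N)"
        using sumb[of "Suc m" "N-1"] that by (simp add: m_def)
      have u: "d n < \<delta>/N" using K that by simp
      have eq: "n + Suc k * N + 1 = Suc m + (N-1)" using N by (simp add: m_def)
      have "dist (x n) (x (n + Suc k*N + 1)) \<le> dist (x n) (x (Suc n)) + dist (x (Suc n)) (x (Suc m)) + dist (x (Suc m)) (x (Suc m + (N-1)))"
      proof -
        have t1: "dist (x n) (x (Suc m + (N-1))) \<le> dist (x n) (x (Suc n)) + dist (x (Suc n)) (x (Suc m + (N-1)))"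
          by (rule dist_triangle)
        have t2: "dist (x (Suc n)) (x (Suc m + (N-1))) \<le> dist (x (Suc n)) (x (Suc m)) + dist (x (Suc m)) (x (Suc m + (N-1)))"
          by (rule dist_triangle)
        show ?thesis unfolding eq using t1 t2 by linarith
      qed
      also have "\<dots> < \<delta>/N + \<epsilon> + real (N-1) * (\<delta>/N)"
        using s t u unfolding d_def by linarith
      also have "\<dots> = \<epsilon> + \<delta>"
      proof -
        have r1: "real (N-1) = real N - 1" using N by (simp add: of_nat_diff)
        have "\<delta>/N + real (N-1) * (\<delta>/N) = (1 + real (N-1)) * (\<delta>/N)" by (simp only: distrib_right mult_1_left)
        also have "\<dots> = real N * (\<delta>/N)" using r1 by simp
        also have "\<dots> = \<delta>" using Nr by simp
        finally show ?thesis by linarith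
      qed
      finally show ?case .
    qed
    show ?thesis
    proof (intro exI allI impI)
      fix a b assume a: "K \<le> a" and ab: "a < b"
      define q where "q = (b - a - 1) div N"
      define r where "r = (b - a - 1) mod N"
      have e1: "q*N + r = b - a - 1" unfolding q_def r_def by (rule div_mult_mod_eq)
      have b1: "b = a + 1 + (b - a - 1)" using ab by simp
      have "b = a + 1 + (q*N + r)" using b1 unfolding e1[symmetric] .
      then have bq: "b = a + q*N + 1 + r" by simp
      have rN: "r < N" using N unfolding r_def by simp
      have "dist (x a) (x b) \<le> dist (x a) (x (a + q*N + 1)) + dist (x (a + q*N + 1)) (x (a + q*N + 1 + r))"
        unfolding bq by (rule dist_triangle)
      also have "\<dots> < \<epsilon> + \<delta> + real r * (\<delta>/N)"
      proof -
        have c1: "dist (x a) (x (a + q*N + 1)) < \<epsilon>+\<delta>" by (rule claim[OF a])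
        have "K \<le> a + q*N + 1" using a by simp
        then have c2: "dist (x (a + q*N + 1)) (x (a + q*N + 1 + r)) \<le> real r * (\<delta>/N)" by (rule sumb)
        show ?thesis using c1 c2 by linarith
      qed
      also have "\<dots> \<le> 3*\<epsilon>"
      proof -
        have "real r * (\<delta>/N) \<le> real N * (\<delta>/N)" using rN \<delta> by (intro mult_right_mono) auto
        then have "real r * (\<delta>/N) \<le> \<delta>" using Nr by simp
        then show ?thesis using \<delta> by linarith
      qed
      finally show "dist (x a) (x b) < 3*\<epsilon>" .
    qed
  qed
  have "Cauchy x"
  proof (rule metric_CauchyI)
    fix e :: real assume "e > 0"
    then obtain K where K: "\<forall>a\<ge>K. \<forall>b>a. dist (x a) (x b) < 3*(e/3)" using key[of "e/3"] by auto
    show "\<exists>M. \<forall>m\<ge>M. \<forall>n\<ge>M. dist (x m) (x n) < e"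
    proof (intro exI allI impI)
      fix m n assume "K \<le> m" "K \<le> n"
      show "dist (x m) (x n) < e"
      proof (cases m n rule: linorder_cases)
        case less then show ?thesis using K \<open>K \<le> m\<close> by simp
      next
        case equal then show ?thesis using \<open>e>0\<close> by simp
      next
        case greater
        then have "dist (x n) (x m) < e" using K \<open>K \<le> n\<close> by simp
        then show ?thesis by (simp add: dist_commute)
      qed
    qed
  qed
  then obtain p where xp: "x \<longlonglongrightarrow> p" using Cauchy_convergent convergent_def by blast
  have pB: "p \<in> B j" for j
  proof -
    define j0 where "j0 = N*c + j - c"
    define f where "f n = j0 + n*N" for n
    have sm: "strict_mono f" unfolding f_def using N by (intro strict_monoI) simp
    have "(x \<circ> f) \<longlonglongrightarrow> p" using LIMSEQ_subseq_LIMSEQ[OF xp sm] .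
    moreover have "(x \<circ> f) n \<in> B j" for n
    proof -
      have "N*c \<ge> c" using N by simp
      then have "c + j0 = j + N*c" unfolding j0_def by linarith
      then have "c + f n = j + (c + n)*N" unfolding f_def by (simp add: algebra_simps)
      then show ?thesis using xB[of "f n"] per2[of j "c+n"] by simp
    qed
    ultimately show ?thesis using closed_sequentially[OF cl] by blast
  qed
  have Tp: "T p = p"
  proof -
    have l0: "(\<lambda>n. dist (x n) p) \<longlonglongrightarrow> 0" by (rule tendsto_dist_iff[THEN iffD1, OF xp])
    have le: "dist (x (Suc n)) (T p) \<le> dist (x n) p" for n
      using contr[OF xB[of n] pB[of "Suc (c+n)"]] by (simp add: xS)
    have "(\<lambda>n. dist (x (Suc n)) (T p)) \<longlonglongrightarrow> 0"
      by (rule tendsto_sandwich[OF always_eventually always_eventually tendsto_const l0]) (use le in auto)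
    then have a: "(\<lambda>n. x (Suc n)) \<longlonglongrightarrow> T p" by (rule tendsto_dist_iff[THEN iffD2])
    have b: "(\<lambda>n. x (Suc n)) \<longlonglongrightarrow> p" by (rule LIMSEQ_Suc[OF xp])
    show ?thesis by (rule LIMSEQ_unique[OF a b])
  qed
  have xe: "x = (\<lambda>n. (T^^n) x0)" by (rule ext) (simp add: x_def)
  show ?thesis
    apply (rule exI[of _ p])
    using pB Tp xp unfolding xe by simp
qed

end

lemma cn: "N \<ge> 1 \<Longrightarrow> cnext N (j mod N + 1) = Suc j mod N + 1"
  by (simp add: cnext_def mod_Suc)

theorem corollary7:
  fixes A :: "nat \<Rightarrow> 'a::complete_space set"
    and T :: "'a \<Rightarrow> 'a"
    and N :: nat
  assumes N: "N \<ge> 1"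
    and nonempty: "\<And>i. i \<in> {1..N} \<Longrightarrow> A i \<noteq> {}"
    and closed: "\<And>i. i \<in> {1..N} \<Longrightarrow> closed (A i)"
    and F1: "\<And>i. i \<in> {1..N} \<Longrightarrow> T ` A i \<subseteq> A (cnext N i)"
    and F3: "\<And>\<epsilon>. \<epsilon> > 0 \<Longrightarrow> \<exists>\<delta>>0. \<forall>i\<in>{1..N}. \<forall>x\<in>A i. \<forall>y\<in>A (cnext N i).
               \<epsilon> \<le> dist x y \<and> dist x y < \<epsilon> + \<delta> \<longrightarrow> dist (T x) (T y) < \<epsilon>"
  shows "(\<Inter>i\<in>{1..N}. A i) \<noteq> {} \<and>
         (\<exists>xs. xs \<in> (\<Inter>i\<in>{1..N}. A i) \<and> T xs = xs \<and>
               (\<forall>z\<in>(\<Union>i\<in>{1..N}. A i). T z = z \<longrightarrow> z = xs) \<and>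
               (\<forall>x\<in>(\<Union>i\<in>{1..N}. A i). (\<lambda>n. (T ^^ n) x) \<longlonglongrightarrow> xs))"
proof -
  define B where "B j = A (j mod N + 1)" for j
  have idx: "j mod N + 1 \<in> {1..N}" for j using N by (simp add: Suc_leI)
  interpret cyc B T N
  proof
    show "N \<ge> 1" by (rule N)
    show "closed (B j)" for j using closed[OF idx] by (simp add: B_def)
    show "T y \<in> B (Suc j)" if "y \<in> B j" for y j
      using F1[OF idx[of j]] that cn[OF N, of j] by (auto simp: B_def)
    show "B (j + N) = B j" for j by (simp add: B_def)
    show "\<exists>\<delta>>0. \<forall>j. \<forall>y\<in>B j. \<forall>z\<in>B (Suc j). \<epsilon> \<le> dist y z \<and> dist y z < \<epsilon> + \<delta> \<longrightarrow> dist (T y) (T z) < \<epsilon>"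
      if eps: "\<epsilon> > 0" for \<epsilon>
    proof -
      obtain \<delta> where "\<delta> > 0" and H: "\<forall>i\<in>{1..N}. \<forall>x\<in>A i. \<forall>y\<in>A (cnext N i).
               \<epsilon> \<le> dist x y \<and> dist x y < \<epsilon> + \<delta> \<longrightarrow> dist (T x) (T y) < \<epsilon>"
        using F3[OF eps] by blast
      show ?thesis
      proof (intro exI conjI allI ballI impI)
        show "\<delta> > 0" by fact
        fix j y z assume "y \<in> B j" "z \<in> B (Suc j)" "\<epsilon> \<le> dist y z \<and> dist y z < \<epsilon> + \<delta>"
        then show "dist (T y) (T z) < \<epsilon>"
          using bspec[OF H idx[of j]] cn[OF N, of j] by (simp add: B_def)
      qed
    qed
  qed
  have AB: "A i = B (i - 1)" if "i \<in> {1..N}" for i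
  proof -
    have "(i-1) mod N = i-1" using that by (intro mod_less) auto
    then show ?thesis using that by (simp add: B_def)
  qed
  obtain x0 where "x0 \<in> A 1" using nonempty[of 1] N by auto
  then have "x0 \<in> B 0" by (simp add: B_def)
  from orbit_conv[OF this] obtain p where p: "\<forall>j. p \<in> B j" "T p = p" by blast
  have pI: "p \<in> (\<Inter>i\<in>{1..N}. A i)" using p AB by auto
  have uniq: "z = p" if "z \<in> (\<Union>i\<in>{1..N}. A i)" "T z = z" for z
    using that unique[OF _ _ p] AB by auto
  have conv: "(\<lambda>n. (T ^^ n) x) \<longlonglongrightarrow> p" if xU: "x \<in> (\<Union>i\<in>{1..N}. A i)" for x
  proof -
    obtain i where "i \<in> {1..N}" "x \<in> A i" using xU by auto
    then have "x \<in> B (i - 1)" using AB by auto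
    from orbit_conv[OF this] obtain q where q: "\<forall>j. q \<in> B j" "T q = q" "(\<lambda>n. (T^^n) x) \<longlonglongrightarrow> q"
      by blast
    have "q = p" using unique[OF _ q(2) p] q(1) by blast
    then show ?thesis using q(3) by simp
  qed
  have ne: "(\<Inter>i\<in>{1..N}. A i) \<noteq> {}" using pI by blast
  show ?thesis
    apply (rule conjI[OF ne])
    apply (rule exI[of _ p])
    using pI p(2) uniq conv by simp
qed

end
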